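(* Let $q_1,q_2$ be positive probability densities w.r.t. $\mu$ on a common support $\Omega$, let $n\ge1$ and $s_1,s_2\in(0,1)$ with $s_1+s_2=1$, and let $\pi\in(0,1)$. Define $$A(q_1,q_2)=\frac{1}{ns_1s_2}\left[\left(\int_\Omega\frac{q_1q_2}{s_1q_1+s_2q_2}\,d\mu\right)^{-1}-1\right].$$ Then, with the convention $0^{-2}=+\infty$, $$A(q_1,q_2)\le\frac{1}{ns_1s_2}\left[\left(1-\min\!\left(1,\sqrt{JS_\pi(q_1,q_2)/\min(\pi,1-\pi)}\right)\right)^{-2}-1\right],$$ $$A(q_1,q_2)\le\frac{1}{ns_1s_2}\left[\left(1-\min\!\left(1,\sqrt{2KL(q_1,q_2)}\right)\right)^{-2}-1\right],\qquad A(q_1,q_2)\le\frac{1}{ns_1s_2}\left[\left(1-\min\!\left(1,\sqrt{2KL(q_2,q_1)}\right)\right)^{-2}-1\right].$$ In particular, if $JS_\pi(q_1,q_2)\to0$, or $KL(q_1,q_2)\to0$, or $KL(q_2,q_1)\to0$ (with $n,s_1,s_2$ fixed), then $A(q_1,q_2)\to0$.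
   Context: $KL(p_1,p_2)=\int\log(p_1/p_2)\,p_1\,d\mu$. The weighted Jensen–Shannon divergence is $JS_\pi(q_1,q_2)=\pi KL(q_1,q_\pi)+(1-\pi)KL(q_2,q_\pi)$ with $q_\pi=\pi q_1+(1-\pi)q_2$. $A(q_1,q_2)$ is the first-order term of the asymptotic relative mean square error of the asymptotically optimal Bridge estimator of $Z_1/Z_2$ based on i.i.d. samples of sizes $ns_1$ and $ns_2$ from $q_1$ and $q_2$. *)

theory Defs
  imports "HOL-Analysis.Analysis"
begin

text \<open>Positive probability density w.r.t. the reference measure M on the common support
  Omega = space M.\<close>
definition pos_density :: "'a measure \<Rightarrow> ('a \<Rightarrow> real) \<Rightarrow> bool" where
  "pos_density M q \<longleftrightarrow> q \<in> borel_measurable M \<and> (\<forall>x\<in>space M. 0 < q x)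
     \<and> integrable M q \<and> integral\<^sup>L M q = 1"

text \<open>Kullback-Leibler divergence KL(p1,p2) = int log(p1/p2) p1 dmu, valued in the extended
  reals: it is +infinity when the integrand is not integrable (its negative part is always
  integrable for probability densities, so this is the usual convention).\<close>
definition KL :: "'a measure \<Rightarrow> ('a \<Rightarrow> real) \<Rightarrow> ('a \<Rightarrow> real) \<Rightarrow> ereal" where
  "KL M p1 p2 =
     (if integrable M (\<lambda>x. ln (p1 x / p2 x) * p1 x)
      then ereal (integral\<^sup>L M (\<lambda>x. ln (p1 x / p2 x) * p1 x)) else \<infinity>)"

definition JS :: "'a measure \<Rightarrow> real \<Rightarrow> ('a \<Rightarrow> real) \<Rightarrow> ('a \<Rightarrow> real) \<Rightarrow> ereal" where
  "JS M \<pi> q1 q2 =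
     (let q\<pi> = (\<lambda>x. \<pi> * q1 x + (1 - \<pi>) * q2 x)
      in ereal \<pi> * KL M q1 q\<pi> + ereal (1 - \<pi>) * KL M q2 q\<pi>)"

definition A_bridge :: "'a measure \<Rightarrow> real \<Rightarrow> real \<Rightarrow> real \<Rightarrow> ('a \<Rightarrow> real) \<Rightarrow> ('a \<Rightarrow> real) \<Rightarrow> real" where
  "A_bridge M n s1 s2 q1 q2 =
     1 / (n * s1 * s2) *
       (inverse (integral\<^sup>L M (\<lambda>x. q1 x * q2 x / (s1 * q1 x + s2 * q2 x))) - 1)"

definition bound_fun :: "real \<Rightarrow> ereal \<Rightarrow> ereal" where
  "bound_fun c t =
     (if 1 \<le> min 1 (sqrt (real_of_ereal t)) \<or> t = \<infinity> then \<infinity>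
      else ereal (c * ((1 - min 1 (sqrt (real_of_ereal t))) powi (-2) - 1)))"

end

theory Submission imports Defs begin

lemma pw_kl:
  fixes a b :: real assumes "a > 0" "b > 0"
  shows "2 * a - 2* sqrt(a * b) \<le> ln(a/b) * a"
proof -
  have r: "sqrt (b/a) > 0" using assms by simp
  have L: "ln (sqrt (b/a)) \<le> sqrt (b/a) - 1" using ln_le_minus_one r by blast
  have E: "ln (a/b) = - 2 * ln (sqrt (b/a))"
    using assms by (simp add: ln_sqrt ln_div)
  moreover have "a * sqrt (b/a) = sqrt (a * b)"
  proof -
    have "a * sqrt (b/a) = sqrt (a^2) * sqrt(b/a)" using assms by simp
    also have "\<dots> = sqrt (a^2 * (b/a))" by (rule real_sqrt_mult[symmetric])
    also have "a^2 * (b/a) = a * b" using assms by (simp add: power2_eq_square)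
    finally show ?thesis .
  qed
  moreover have "ln(a/b) \<ge> -2 * (sqrt (b/a) - 1)" unfolding E using L by simp
  ultimately have "ln(a/b) \<ge> -2 * (sqrt (b/a) - 1)" by simp
  hence "ln(a/b) * a \<ge> -2 * (sqrt (b/a) - 1) * a" using assms
    by (intro mult_right_mono) auto
  thus ?thesis using \<open>a * sqrt (b/a) = sqrt (a * b)\<close> by (simp add: algebra_simps)
qed

lemma pw_w:
  fixes a b s1 s2 c :: real assumes "a > 0" "b > 0" "s1 > 0" "s2 > 0"
  shows "2 * c* sqrt(a * b) - c^2 * (s1 * a+s2 * b) \<le> a * b/(s1 * a+s2 * b)"
proof -
  define w where "w = s1 * a+s2 * b"
  have w: "w > 0" using assms unfolding w_def by (simp add: add_pos_pos)
  define h where "h = sqrt(a * b)"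
  have hh: "h^2 = a * b" using assms unfolding h_def by simp
  have "0 \<le> (h - c * w)^2 / w" using w by simp
  also have "(h - c * w)^2 / w = a * b/w - 2 * c*h + c^2 * w" using w hh
    by (simp add: field_simps power2_eq_square)
  finally show ?thesis unfolding w_def[symmetric] h_def[symmetric] by simp
qed

lemma pw_w_le:
  fixes a b s1 s2 :: real assumes "a > 0" "b > 0" "s1 > 0" "s2 > 0" "s1+s2 = 1"
  shows "a * b/(s1 * a+s2 * b) \<le> s2 * a + s1 * b" and "0 \<le> a * b/(s1 * a+s2 * b)"
proof -
  have w: "s1 * a+s2 * b > 0" using assms by (simp add: add_pos_pos)
  have "a * b \<le> (s1 * a+s2 * b) * (s2 * a+s1 * b)"
  proof -
    have "(s1 * a+s2 * b) * (s2 * a+s1 * b) = a * b*(s1+s2)^2 + s1 * s2 * (a-b)^2"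
      by (simp add: algebra_simps power2_eq_square)
    moreover have "s1 * s2 * (a-b)^2 \<ge> 0" using assms by simp
    ultimately show ?thesis using assms by simp
  qed
  thus "a * b/(s1 * a+s2 * b) \<le> s2 * a + s1 * b" using w by (simp add: divide_le_eq mult.commute)
  show "0 \<le> a * b/(s1 * a+s2 * b)" using w assms by simp
qed

lemma pw_h:
  fixes a b :: real assumes "a > 0" "b > 0"
  shows "sqrt(a * b) \<le> (a+b)/2" "0 \<le> sqrt(a * b)"
  using arith_geo_mean_sqrt[of a b] assms by auto

lemma pw_js:
  fixes a b p :: real assumes "a > 0" "b > 0" "0 < p" "p < 1"
  shows "min p (1-p)/2 * (a + b - 2* sqrt(a * b))
     \<le> p * (ln(a/(p * a+(1-p) * b)) * a) + (1-p) * (ln(b/(p * a+(1-p) * b)) * b)"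
proof -
  define q where "q = p * a+(1-p) * b"
  have q: "q > 0" using assms unfolding q_def by (simp add: add_pos_pos)
  define x y z where "x = sqrt a" and "y = sqrt b" and "z = sqrt q"
  have xyz: "x > 0" "y > 0" "z > 0" using assms q unfolding x_def y_def z_def by auto
  have sq: "a = x^2" "b = y^2" "q = z^2" using assms q unfolding x_def y_def z_def by auto
  have m: "sqrt(a * b) = x * y" "sqrt(a * q) = x * z" "sqrt(b * q) = y * z"
    unfolding x_def y_def z_def by (simp_all add: real_sqrt_mult)
  have k1: "2 * a - 2 * x*z \<le> ln(a/q) * a" using pw_kl[OF assms(1) q] m by simp
  have k2: "2 * b - 2 * y*z \<le> ln(b/q) * b" using pw_kl[OF assms(2) q] m by simp
  have "p * (2 * a - 2 * x*z) + (1-p) * (2 * b - 2 * y*z) \<le> p * (ln(a/q) * a) + (1-p) * (ln(b/q) * b)"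
    using k1 k2 assms by (intro add_mono mult_left_mono) auto
  moreover have "p * (2 * a - 2 * x*z) + (1-p) * (2 * b - 2 * y*z) = p * (x-z)^2 + (1-p) * (y-z)^2"
  proof -
    have "z^2 = p * x^2 + (1-p) * y^2" using sq q_def by simp
    thus ?thesis using sq by (simp add: algebra_simps power2_eq_square)
  qed
  moreover have "min p (1-p) * ((x-z)^2 + (y-z)^2) \<le> p * (x-z)^2 + (1-p) * (y-z)^2"
  proof -
    have "min p (1-p) * (x-z)^2 \<le> p * (x-z)^2" by (intro mult_right_mono) auto
    moreover have "min p (1-p) * (y-z)^2 \<le> (1-p) * (y-z)^2" by (intro mult_right_mono) auto
    ultimately show ?thesis by (simp add: distrib_left)
  qed
  moreover have "min p (1-p)/2 * (a + b - 2* sqrt(a * b)) \<le> min p (1-p) * ((x-z)^2 + (y-z)^2)"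
  proof -
    have "a + b - 2* sqrt(a * b) = (x-y)^2" using sq m by (simp add: power2_eq_square algebra_simps)
    moreover have "(x-y)^2 \<le> 2 * ((x-z)^2 + (y-z)^2)"
    proof -
      have "2 * ((x-z)^2 + (y-z)^2) - (x-y)^2 = (x+y-2 * z)^2" by (simp add: algebra_simps power2_eq_square)
      moreover have "(x+y-2 * z)^2 \<ge> 0" by simp
      ultimately show ?thesis by linarith
    qed
    moreover have m0: "min p (1-p) \<ge> 0" using assms by simp
    ultimately have "min p (1-p) * (x-y)^2 \<le> min p (1-p) * (2 * ((x - z)^2 + (y - z)^2))"
      by (intro mult_left_mono) auto
    moreover have "min p (1-p)/2 * (a + b - 2 * sqrt(a * b)) = (min p (1-p) * (x-y)^2)/2"
      using \<open>a + b - 2 * sqrt(a * b) = (x-y)^2\<close> by simp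
    moreover have "min p (1-p) * (2 * ((x - z)^2 + (y - z)^2)) = 2 * (min p (1-p) * ((x - z)^2 + (y - z)^2))"
      by simp
    ultimately show ?thesis by linarith
  qed
  ultimately show ?thesis unfolding q_def by linarith
qed


definition BC :: "'a measure \<Rightarrow> ('a \<Rightarrow> real) \<Rightarrow> ('a \<Rightarrow> real) \<Rightarrow> real" where
  "BC M q1 q2 = integral\<^sup>L M (\<lambda>x. sqrt (q1 x * q2 x))"

lemma BC_sym: "BC M q1 q2 = BC M q2 q1"
  unfolding BC_def by (simp add: mult.commute)

lemma BC_facts:
  assumes d1: "pos_density M q1" and d2: "pos_density M q2"
  shows "integrable M (\<lambda>x. sqrt (q1 x * q2 x))" "0 \<le> BC M q1 q2" "BC M q1 q2 \<le> 1"
proof -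
  have [measurable]: "q1 \<in> borel_measurable M" "q2 \<in> borel_measurable M"
    and i1: "integrable M q1" and i2: "integrable M q2"
    and e1: "integral\<^sup>L M q1 = 1" and e2: "integral\<^sup>L M q2 = 1"
    and p1: "\<forall>x\<in>space M. 0 < q1 x" and p2: "\<forall>x\<in>space M. 0 < q2 x"
    using d1 d2 unfolding pos_density_def by auto
  have ih: "integrable M (\<lambda>x. (q1 x + q2 x)/2)" using i1 i2 by auto
  show ii: "integrable M (\<lambda>x. sqrt (q1 x * q2 x))"
  proof (rule Bochner_Integration.integrable_bound[OF ih])
    show "(\<lambda>x. sqrt (q1 x * q2 x)) \<in> borel_measurable M" by measurable
    show "AE x in M. norm (sqrt (q1 x * q2 x)) \<le> norm ((q1 x + q2 x)/2)"
    proof (intro AE_I2)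
      fix x assume x: "x \<in> space M"
      have a: "0 < q1 x" "0 < q2 x" using x p1 p2 by auto
      have "norm (sqrt (q1 x * q2 x)) = sqrt (q1 x * q2 x)" using a by simp
      moreover have "norm ((q1 x + q2 x)/2) = (q1 x + q2 x)/2" using a by simp
      ultimately show "norm (sqrt (q1 x * q2 x)) \<le> norm ((q1 x + q2 x)/2)" using pw_h[OF a] by simp
    qed
  qed
  show "0 \<le> BC M q1 q2" unfolding BC_def using p1 p2
    by (intro integral_nonneg_AE AE_I2) (auto simp: zero_le_mult_iff less_imp_le)
  have "BC M q1 q2 \<le> integral\<^sup>L M (\<lambda>x. (q1 x + q2 x)/2)" unfolding BC_def
    using p1 p2 pw_h by (intro integral_mono ii ih) auto
  also have "\<dots> = 1" using i1 i2 e1 e2 by simp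
  finally show "BC M q1 q2 \<le> 1" .
qed

lemma I_facts:
  assumes d1: "pos_density M q1" and d2: "pos_density M q2"
    and s: "0 < s1" "0 < s2" "s1 + s2 = 1"
  shows "integrable M (\<lambda>x. q1 x * q2 x / (s1 * q1 x + s2 * q2 x))"
    "(BC M q1 q2)^2 \<le> integral\<^sup>L M (\<lambda>x. q1 x * q2 x / (s1 * q1 x + s2 * q2 x))"
    "integral\<^sup>L M (\<lambda>x. q1 x * q2 x / (s1 * q1 x + s2 * q2 x)) \<le> 1"
proof -
  have [measurable]: "q1 \<in> borel_measurable M" "q2 \<in> borel_measurable M"
    and i1: "integrable M q1" and i2: "integrable M q2"
    and e1: "integral\<^sup>L M q1 = 1" and e2: "integral\<^sup>L M q2 = 1"
    and p1: "\<forall>x\<in>space M. 0 < q1 x" and p2: "\<forall>x\<in>space M. 0 < q2 x"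
    using d1 d2 unfolding pos_density_def by auto
  have ih: "integrable M (\<lambda>x. s2 * q1 x + s1 * q2 x)" using i1 i2 by auto
  show ii: "integrable M (\<lambda>x. q1 x * q2 x / (s1 * q1 x + s2 * q2 x))"
  proof (rule Bochner_Integration.integrable_bound[OF ih])
    show "(\<lambda>x. q1 x * q2 x / (s1 * q1 x + s2 * q2 x)) \<in> borel_measurable M" by measurable
    show "AE x in M. norm (q1 x * q2 x / (s1 * q1 x + s2 * q2 x)) \<le> norm (s2 * q1 x + s1 * q2 x)"
    proof (intro AE_I2)
      fix x assume x: "x \<in> space M"
      have a: "0 < q1 x" "0 < q2 x" using x p1 p2 by auto
      have "norm (s2 * q1 x + s1 * q2 x) = s2 * q1 x + s1 * q2 x" using a s by simp
      moreover have "norm (q1 x * q2 x / (s1 * q1 x + s2 * q2 x)) = q1 x * q2 x / (s1 * q1 x + s2 * q2 x)"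
        using pw_w_le(2)[OF a s] by (simp only: real_norm_def abs_of_nonneg)
      ultimately show "norm (q1 x * q2 x / (s1 * q1 x + s2 * q2 x)) \<le> norm (s2 * q1 x + s1 * q2 x)"
        using pw_w_le[OF a s] by simp
    qed
  qed
  define B where "B = BC M q1 q2"
  have ih2: "integrable M (\<lambda>x. 2 * B * sqrt (q1 x * q2 x) - B^2 * (s1 * q1 x + s2 * q2 x))"
    using BC_facts(1)[OF d1 d2] i1 i2 by auto
  have "integral\<^sup>L M (\<lambda>x. 2 * B * sqrt (q1 x * q2 x) - B^2 * (s1 * q1 x + s2 * q2 x))
      = 2 * B * B - B^2 * (s1 + s2)"
    using BC_facts(1)[OF d1 d2] i1 i2 e1 e2 unfolding B_def BC_def by simp
  also have "\<dots> = B^2" using s by (simp add: power2_eq_square)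
  finally have eq: "integral\<^sup>L M (\<lambda>x. 2 * B * sqrt (q1 x * q2 x) - B^2 * (s1 * q1 x + s2 * q2 x)) = B^2" .
  have "integral\<^sup>L M (\<lambda>x. 2 * B * sqrt (q1 x * q2 x) - B^2 * (s1 * q1 x + s2 * q2 x))
     \<le> integral\<^sup>L M (\<lambda>x. q1 x * q2 x / (s1 * q1 x + s2 * q2 x))"
    using p1 p2 s pw_w by (intro integral_mono ih2 ii) auto
  thus "(BC M q1 q2)^2 \<le> integral\<^sup>L M (\<lambda>x. q1 x * q2 x / (s1 * q1 x + s2 * q2 x))"
    using eq B_def by simp
  have "integral\<^sup>L M (\<lambda>x. q1 x * q2 x / (s1 * q1 x + s2 * q2 x))
     \<le> integral\<^sup>L M (\<lambda>x. s2 * q1 x + s1 * q2 x)"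
    using p1 p2 s pw_w_le by (intro integral_mono ih ii) auto
  also have "\<dots> = 1" using i1 i2 e1 e2 s by simp
  finally show "integral\<^sup>L M (\<lambda>x. q1 x * q2 x / (s1 * q1 x + s2 * q2 x)) \<le> 1" .
qed

lemma KL_prop:
  assumes d1: "pos_density M q1" and d2: "pos_density M q2"
  shows "KL M q1 q2 = \<infinity> \<or> (\<exists>r. KL M q1 q2 = ereal r \<and> 2 * (1 - BC M q1 q2) \<le> r)"
proof (cases "integrable M (\<lambda>x. ln (q1 x / q2 x) * q1 x)")
  case False thus ?thesis unfolding KL_def by simp
next
  case True
  have [measurable]: "q1 \<in> borel_measurable M" "q2 \<in> borel_measurable M"
    and i1: "integrable M q1" and i2: "integrable M q2"
    and e1: "integral\<^sup>L M q1 = 1" and e2: "integral\<^sup>L M q2 = 1"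
    and p1: "\<forall>x\<in>space M. 0 < q1 x" and p2: "\<forall>x\<in>space M. 0 < q2 x"
    using d1 d2 unfolding pos_density_def by auto
  have ih: "integrable M (\<lambda>x. 2 * q1 x - 2 * sqrt (q1 x * q2 x))"
    using BC_facts(1)[OF d1 d2] i1 by auto
  have "integral\<^sup>L M (\<lambda>x. 2 * q1 x - 2 * sqrt (q1 x * q2 x))
       \<le> integral\<^sup>L M (\<lambda>x. ln (q1 x / q2 x) * q1 x)"
    using p1 p2 pw_kl by (intro integral_mono ih True) auto
  moreover have "integral\<^sup>L M (\<lambda>x. 2 * q1 x - 2 * sqrt (q1 x * q2 x)) = 2 * (1 - BC M q1 q2)"
    using BC_facts(1)[OF d1 d2] i1 e1 unfolding BC_def by simp
  ultimately show ?thesis unfolding KL_def using True by auto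
qed

lemma JS_prop:
  assumes d1: "pos_density M q1" and d2: "pos_density M q2" and p: "0 < p" "p < 1"
  shows "JS M p q1 q2 = \<infinity> \<or> (\<exists>r. JS M p q1 q2 = ereal r \<and> min p (1-p) * (1 - BC M q1 q2) \<le> r)"
proof -
  define f1 where "f1 = (\<lambda>x. ln (q1 x / (p * q1 x + (1 - p) * q2 x)) * q1 x)"
  define f2 where "f2 = (\<lambda>x. ln (q2 x / (p * q1 x + (1 - p) * q2 x)) * q2 x)"
  have JSe: "JS M p q1 q2 = ereal p * (if integrable M f1 then ereal (integral\<^sup>L M f1) else \<infinity>)
     + ereal (1-p) * (if integrable M f2 then ereal (integral\<^sup>L M f2) else \<infinity>)"
    unfolding JS_def KL_def Let_def f1_def f2_def by simp
  show ?thesis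
  proof (cases "integrable M f1 \<and> integrable M f2")
    case False
    then show ?thesis unfolding JSe using p by auto
  next
    case True
    have [measurable]: "q1 \<in> borel_measurable M" "q2 \<in> borel_measurable M"
      and i1: "integrable M q1" and i2: "integrable M q2"
      and e1: "integral\<^sup>L M q1 = 1" and e2: "integral\<^sup>L M q2 = 1"
      and p1: "\<forall>x\<in>space M. 0 < q1 x" and p2: "\<forall>x\<in>space M. 0 < q2 x"
      using d1 d2 unfolding pos_density_def by auto
    define m where "m = min p (1-p)"
    have ih: "integrable M (\<lambda>x. m / 2 * (q1 x + q2 x - 2 * sqrt (q1 x * q2 x)))"
      using BC_facts(1)[OF d1 d2] i1 i2 by auto
    have ij: "integrable M (\<lambda>x. p * f1 x + (1-p) * f2 x)" using True by auto
    have "integral\<^sup>L M (\<lambda>x. m / 2 * (q1 x + q2 x - 2 * sqrt (q1 x * q2 x)))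
       \<le> integral\<^sup>L M (\<lambda>x. p * f1 x + (1-p) * f2 x)"
    proof (intro integral_mono ih ij)
      fix x assume "x \<in> space M"
      hence "0 < q1 x" "0 < q2 x" using p1 p2 by auto
      from pw_js[OF this p] show "m / 2 * (q1 x + q2 x - 2 * sqrt (q1 x * q2 x)) \<le> p * f1 x + (1-p) * f2 x"
        unfolding f1_def f2_def m_def by simp
    qed
    moreover have "integral\<^sup>L M (\<lambda>x. m / 2 * (q1 x + q2 x - 2 * sqrt (q1 x * q2 x))) = m * (1 - BC M q1 q2)"
      using BC_facts(1)[OF d1 d2] i1 i2 e1 e2 unfolding BC_def by (simp add: algebra_simps)
    moreover have "integral\<^sup>L M (\<lambda>x. p * f1 x + (1-p) * f2 x) = p * integral\<^sup>L M f1 + (1-p) * integral\<^sup>L M f2"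
      using True by simp
    ultimately have "m * (1 - BC M q1 q2) \<le> p * integral\<^sup>L M f1 + (1-p) * integral\<^sup>L M f2"
      by linarith
    moreover have "JS M p q1 q2 = ereal (p * integral\<^sup>L M f1 + (1-p) * integral\<^sup>L M f2)"
      unfolding JSe using True by simp
    ultimately show ?thesis unfolding m_def by auto
  qed
qed


lemma core:
  assumes d1: "pos_density M q1" and d2: "pos_density M q2"
    and n: "n \<ge> 1" and s: "0 < s1" "0 < s2" "s1 + s2 = 1"
    and u: "0 \<le> u" "u < 1" "1 - BC M q1 q2 \<le> u"
  shows "0 \<le> A_bridge M n s1 s2 q1 q2"
    "A_bridge M n s1 s2 q1 q2 \<le> 1 / (n * s1 * s2) * (inverse ((1 - u)^2) - 1)"
proof -
  define I where "I = integral\<^sup>L M (\<lambda>x. q1 x * q2 x / (s1 * q1 x + s2 * q2 x))"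
  have c: "1 / (n * s1 * s2) > 0" using n s by simp
  have B: "0 < 1 - u" "1 - u \<le> BC M q1 q2" using u by auto
  have "(1-u)^2 \<le> (BC M q1 q2)^2" using B by (intro power_mono) auto
  also have "\<dots> \<le> I" unfolding I_def using I_facts(2)[OF d1 d2 s] .
  finally have Ig: "(1-u)^2 \<le> I" .
  have Ipos: "0 < I" using Ig B(1) by (smt (verit) zero_less_power)
  have I1: "I \<le> 1" unfolding I_def using I_facts(3)[OF d1 d2 s] .
  have "1 \<le> inverse I" using Ipos I1 by (simp add: one_le_inverse_iff)  
  hence "0 \<le> inverse I - 1" by simp
  thus "0 \<le> A_bridge M n s1 s2 q1 q2" unfolding A_bridge_def I_def[symmetric]
    using c by simp
  have "inverse I \<le> inverse ((1 - u)^2)" using Ig B(1) by (intro le_imp_inverse_le) auto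
  thus "A_bridge M n s1 s2 q1 q2 \<le> 1 / (n * s1 * s2) * (inverse ((1 - u)^2) - 1)"
    unfolding A_bridge_def I_def[symmetric] using c by (intro mult_left_mono) auto
qed

lemma bound:
  assumes d1: "pos_density M q1" and d2: "pos_density M q2"
    and n: "n \<ge> 1" and s: "0 < s1" "0 < s2" "s1 + s2 = 1"
    and T: "T = \<infinity> \<or> (\<exists>t. T = ereal t \<and> 1 - BC M q1 q2 \<le> t)"
  shows "ereal (A_bridge M n s1 s2 q1 q2) \<le> bound_fun (1 / (n * s1 * s2)) T"
proof (cases "T = \<infinity>")
  case True thus ?thesis unfolding bound_fun_def by simp
next
  case False
  then obtain t where t: "T = ereal t" "1 - BC M q1 q2 \<le> t" using T by auto
  have t0: "0 \<le> t" using t BC_facts(3)[OF d1 d2] by linarith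
  show ?thesis
  proof (cases "1 \<le> min 1 (sqrt t)")
    case True thus ?thesis unfolding bound_fun_def t by simp
  next
    case False
    hence st: "sqrt t < 1" by simp
    hence t1: "t < 1" by simp
    have "t \<le> sqrt t"
    proof -
      have "sqrt t * sqrt t \<le> 1 * sqrt t" using st t0 by (intro mult_right_mono) auto
      moreover have "sqrt t * sqrt t = t" using t0 by simp
      ultimately show ?thesis by linarith
    qed
    hence u: "0 \<le> sqrt t" "sqrt t < 1" "1 - BC M q1 q2 \<le> sqrt t" using t0 st t by auto
    have mn: "min 1 (sqrt t) = sqrt t" using st by simp
    have "(1 - sqrt t) powi (-2) = inverse ((1 - sqrt t)^2)"
      by (simp add: power_int_minus)
    thus ?thesis unfolding bound_fun_def t using False core(2)[OF d1 d2 n s u] mn by simp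
  qed
qed

lemma limit:
  fixes Q1 Q2 :: "nat \<Rightarrow> 'a \<Rightarrow> real" and X :: "nat \<Rightarrow> ereal"
  assumes d: "\<And>k. pos_density M (Q1 k) \<and> pos_density M (Q2 k)"
    and n: "n \<ge> 1" and s: "0 < s1" "0 < s2" "s1 + s2 = 1" and al: "0 < \<alpha>"
    and X: "X \<longlonglongrightarrow> 0"
    and P: "\<And>k. X k = \<infinity> \<or> (\<exists>r. X k = ereal r \<and> \<alpha> * (1 - BC M (Q1 k) (Q2 k)) \<le> r)"
  shows "(\<lambda>k. A_bridge M n s1 s2 (Q1 k) (Q2 k)) \<longlonglongrightarrow> 0"
proof -
  define r where "r k = real_of_ereal (X k)" for k
  define u where "u k = max 0 (r k / \<alpha>)" for k
  have ev1: "eventually (\<lambda>k. X k < 1) sequentially"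
    using X by (rule order_tendstoD) simp
  have r0: "r \<longlonglongrightarrow> 0" unfolding r_def using X by (intro lim_real_of_ereal) (simp add: zero_ereal_def)
  have "(\<lambda>k. r k / \<alpha>) \<longlonglongrightarrow> 0 / \<alpha>" using al by (intro tendsto_intros r0) auto
  hence "(\<lambda>k. max 0 (r k / \<alpha>)) \<longlonglongrightarrow> max 0 (0 / \<alpha>)" by (rule tendsto_max[OF tendsto_const])
  hence u0: "u \<longlonglongrightarrow> 0" unfolding u_def by simp
  have ev2: "eventually (\<lambda>k. u k < 1) sequentially"
    using u0 by (rule order_tendstoD) simp
  have ev: "eventually (\<lambda>k. 0 \<le> A_bridge M n s1 s2 (Q1 k) (Q2 k) \<and>
      A_bridge M n s1 s2 (Q1 k) (Q2 k) \<le> 1 / (n * s1 * s2) * (inverse ((1 - u k)^2) - 1)) sequentially"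
    using ev1 ev2
  proof eventually_elim
    case (elim k)
    have "X k \<noteq> \<infinity>" using elim by auto
    then obtain rr where rr: "X k = ereal rr" "\<alpha> * (1 - BC M (Q1 k) (Q2 k)) \<le> rr" using P[of k] by auto
    have "r k = rr" unfolding r_def rr by simp
    hence "1 - BC M (Q1 k) (Q2 k) \<le> r k / \<alpha>" using rr al by (simp add: field_simps mult.commute)
    hence "1 - BC M (Q1 k) (Q2 k) \<le> u k" unfolding u_def by simp
    moreover have "0 \<le> u k" unfolding u_def by simp
    ultimately show ?case using core[OF conjunct1[OF d] conjunct2[OF d] n s, of "u k"] elim by auto
  qed
  have up: "(\<lambda>k. 1 / (n * s1 * s2) * (inverse ((1 - u k)^2) - 1)) \<longlonglongrightarrow> 1 / (n * s1 * s2) * (inverse ((1 - 0)^2) - 1)"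
    by (intro tendsto_intros u0) simp
  show ?thesis
    by (rule tendsto_sandwich[OF eventually_mono[OF ev] eventually_mono[OF ev] tendsto_const]) (use up in auto)
qed

lemma JS_P:
  assumes d1: "pos_density M q1" and d2: "pos_density M q2" and p: "0 < p" "p < 1"
  shows "JS M p q1 q2 / ereal (min p (1-p)) = \<infinity> \<or>
     (\<exists>t. JS M p q1 q2 / ereal (min p (1-p)) = ereal t \<and> 1 - BC M q1 q2 \<le> t)"
proof -
  have m: "min p (1-p) > 0" using p by simp
  have mz: "min p (1-p) \<noteq> 0" using m by linarith
  from JS_prop[OF d1 d2 p] show ?thesis
  proof
    assume "JS M p q1 q2 = \<infinity>" thus ?thesis using m by (simp add: divide_ereal_def del: ereal_min)
  next
    assume "\<exists>r. JS M p q1 q2 = ereal r \<and> min p (1-p) * (1 - BC M q1 q2) \<le> r"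
    then obtain r where r: "JS M p q1 q2 = ereal r" "min p (1-p) * (1 - BC M q1 q2) \<le> r" by auto
    have "1 - BC M q1 q2 \<le> r / min p (1-p)" using r(2) m by (simp add: le_divide_eq mult.commute)
    moreover have "JS M p q1 q2 / ereal (min p (1-p)) = ereal (r / min p (1-p))" using r(1) mz by (simp del: ereal_min add: mz)
    ultimately show ?thesis by auto
  qed
qed

lemma KL_P:
  assumes d1: "pos_density M q1" and d2: "pos_density M q2"
  shows "2 * KL M q1 q2 = \<infinity> \<or> (\<exists>t. 2 * KL M q1 q2 = ereal t \<and> 1 - BC M q1 q2 \<le> t)"
proof -
  from KL_prop[OF d1 d2] show ?thesis
  proof
    assume "KL M q1 q2 = \<infinity>" thus ?thesis by simp
  next
    assume "\<exists>r. KL M q1 q2 = ereal r \<and> 2 * (1 - BC M q1 q2) \<le> r"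
    then obtain r where r: "KL M q1 q2 = ereal r" "2 * (1 - BC M q1 q2) \<le> r" by auto
    have h: "0 \<le> 1 - BC M q1 q2" using BC_facts(3)[OF d1 d2] by simp
    have "1 - BC M q1 q2 \<le> 2 * r" using r(2) h by (simp add: algebra_simps)
    moreover have "2 * KL M q1 q2 = ereal (2 * r)" using r(1) by simp
    ultimately show ?thesis by auto
  qed
qed

theorem proposition4:
  fixes M :: "'a measure" and q1 q2 :: "'a \<Rightarrow> real" and n s1 s2 \<pi> :: real
  assumes "pos_density M q1" and "pos_density M q2"
    and "n \<ge> 1" and "0 < s1" and "s1 < 1" and "0 < s2" and "s2 < 1" and "s1 + s2 = 1"
    and "0 < \<pi>" and "\<pi> < 1"
  shows "ereal (A_bridge M n s1 s2 q1 q2)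
           \<le> bound_fun (1 / (n * s1 * s2)) (JS M \<pi> q1 q2 / ereal (min \<pi> (1 - \<pi>)))
       \<and> ereal (A_bridge M n s1 s2 q1 q2) \<le> bound_fun (1 / (n * s1 * s2)) (2 * KL M q1 q2)
       \<and> ereal (A_bridge M n s1 s2 q1 q2) \<le> bound_fun (1 / (n * s1 * s2)) (2 * KL M q2 q1)
       \<and> (\<forall>Q1 Q2 :: nat \<Rightarrow> 'a \<Rightarrow> real.
           (\<forall>k. pos_density M (Q1 k) \<and> pos_density M (Q2 k)) \<longrightarrow>
           (((\<lambda>k. JS M \<pi> (Q1 k) (Q2 k)) \<longlonglongrightarrow> 0) \<or>
           ((\<lambda>k. KL M (Q1 k) (Q2 k)) \<longlonglongrightarrow> 0) \<or>
           ((\<lambda>k. KL M (Q2 k) (Q1 k)) \<longlonglongrightarrow> 0)) \<longrightarrow>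
           (\<lambda>k. A_bridge M n s1 s2 (Q1 k) (Q2 k)) \<longlonglongrightarrow> 0)"
proof (intro conjI allI impI)
  note d1 = assms(1) and d2 = assms(2) and n = assms(3) and s = assms(4) assms(6) assms(8)
  note p = assms(9) assms(10)
  show "ereal (A_bridge M n s1 s2 q1 q2)
           \<le> bound_fun (1 / (n * s1 * s2)) (JS M \<pi> q1 q2 / ereal (min \<pi> (1 - \<pi>)))"
    by (rule bound[OF d1 d2 n s JS_P[OF d1 d2 p]])
  show "ereal (A_bridge M n s1 s2 q1 q2) \<le> bound_fun (1 / (n * s1 * s2)) (2 * KL M q1 q2)"
    by (rule bound[OF d1 d2 n s KL_P[OF d1 d2]])
  show "ereal (A_bridge M n s1 s2 q1 q2) \<le> bound_fun (1 / (n * s1 * s2)) (2 * KL M q2 q1)"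
    using bound[OF d1 d2 n s, of "2 * KL M q2 q1"] KL_P[OF d2 d1] BC_sym[of M q2 q1] by simp
  fix Q1 Q2 :: "nat \<Rightarrow> 'a \<Rightarrow> real"
  assume dQ: "\<forall>k. pos_density M (Q1 k) \<and> pos_density M (Q2 k)"
  hence dQ': "\<And>k. pos_density M (Q1 k) \<and> pos_density M (Q2 k)" by blast
  assume lim: "((\<lambda>k. JS M \<pi> (Q1 k) (Q2 k)) \<longlonglongrightarrow> 0) \<or>
           ((\<lambda>k. KL M (Q1 k) (Q2 k)) \<longlonglongrightarrow> 0) \<or>
           ((\<lambda>k. KL M (Q2 k) (Q1 k)) \<longlonglongrightarrow> 0)"
  have m: "0 < min \<pi> (1-\<pi>)" using p by simp
  from lim show "(\<lambda>k. A_bridge M n s1 s2 (Q1 k) (Q2 k)) \<longlonglongrightarrow> 0"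
  proof (elim disjE)
    assume X: "(\<lambda>k. JS M \<pi> (Q1 k) (Q2 k)) \<longlonglongrightarrow> 0"
    show ?thesis
      by (rule limit[OF dQ' n s m X]) (use JS_prop[OF conjunct1[OF dQ'] conjunct2[OF dQ'] p] in blast)
  next
    assume X: "(\<lambda>k. KL M (Q1 k) (Q2 k)) \<longlonglongrightarrow> 0"
    show ?thesis
      by (rule limit[OF dQ' n s _ X, of 2]) (use KL_prop[OF conjunct1[OF dQ'] conjunct2[OF dQ']] in auto)
  next
    assume X: "(\<lambda>k. KL M (Q2 k) (Q1 k)) \<longlonglongrightarrow> 0"
    show ?thesis
    proof (rule limit[OF dQ' n s _ X, of 2])
      fix k
      show "KL M (Q2 k) (Q1 k) = \<infinity> \<or> (\<exists>r. KL M (Q2 k) (Q1 k) = ereal r \<and> 2 * (1 - BC M (Q1 k) (Q2 k)) \<le> r)"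
        using KL_prop[OF conjunct2[OF dQ'] conjunct1[OF dQ'], of k k] BC_sym[of M "Q2 k" "Q1 k"] by simp
    qed simp
  qed
qed

end
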